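(* Let $k \to B \xrightarrow{i} A \xrightarrow{p} H \to k$ be an exact sequence of Hopf algebras and let $M$ be a projective left $A$-module. Then $\mathrm{Tor}^H_n(k_\varepsilon, M/B^+M) = 0$ for all $n\ge 1$, where $M/B^+M\simeq\mathrm{Tor}^B_0(k_\varepsilon,M)$ is a left $H$-module via $p(a)\cdot\pi_M(m) = \pi_M(am)$ ($\pi_M: M\to M/B^+M$ the projection).
   Context: Exact sequence of Hopf algebras: $i$ injective, $p$ surjective, $\ker(p) = i(B)^+A = A\,i(B)^+$ (with $B^+=\ker\varepsilon$), and $i(B) = \{a : a_{(1)}\otimes p(a_{(2)})=a\otimes 1\} = \{a : p(a_{(1)})\otimes a_{(2)} = 1\otimes a\}$; $B$ identified with $i(B)$. $k_\varepsilon$ is $k$ with trivial right action via the counit. *)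

theory Defs
  imports Main
begin

section \<open>Vector spaces, algebras, Hopf algebras over a field 'k (carrier = whole type)\<close>

record ('k, 'a) kvs =
  vadd   :: "'a \<Rightarrow> 'a \<Rightarrow> 'a"
  vzero  :: "'a"
  vsmult :: "'k \<Rightarrow> 'a \<Rightarrow> 'a"

record ('k, 'a) kalg = "('k, 'a) kvs" +
  amult :: "'a \<Rightarrow> 'a \<Rightarrow> 'a"
  aone  :: "'a"

text \<open>Comultiplication takes values in A (x) A; an element of A (x) A is represented by a
  finite list of pairs (a representative sum of simple tensors).  Two such representatives
  denote the same tensor iff they agree on all products of linear functionals
  (for vector spaces over a field the canonical map A (x) A' -> (A* x A'*)-bilinear forms is
  injective), so all axioms involving tensors are stated through such evaluations.\<close>

record ('k, 'a) hopf = "('k, 'a) kalg" +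
  comul    :: "'a \<Rightarrow> ('a \<times> 'a) list"
  counit   :: "'a \<Rightarrow> 'k"
  antipode :: "'a \<Rightarrow> 'a"

definition vsum :: "('k, 'a, 'z) kvs_scheme \<Rightarrow> 'a list \<Rightarrow> 'a" where
  "vsum V xs = foldr (vadd V) xs (vzero V)"

definition vector_space :: "('k::field, 'a, 'z) kvs_scheme \<Rightarrow> bool" where
  "vector_space V \<longleftrightarrow>
     (\<forall>x y z. vadd V (vadd V x y) z = vadd V x (vadd V y z)) \<and>
     (\<forall>x y. vadd V x y = vadd V y x) \<and>
     (\<forall>x. vadd V x (vzero V) = x) \<and>
     (\<forall>x. vadd V x (vsmult V (-1) x) = vzero V) \<and>
     (\<forall>c x y. vsmult V c (vadd V x y) = vadd V (vsmult V c x) (vsmult V c y)) \<and>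
     (\<forall>c d x. vsmult V (c + d) x = vadd V (vsmult V c x) (vsmult V d x)) \<and>
     (\<forall>c d x. vsmult V (c * d) x = vsmult V c (vsmult V d x)) \<and>
     (\<forall>x. vsmult V 1 x = x)"

definition lin_fun :: "('k::field, 'a, 'z) kvs_scheme \<Rightarrow> ('a \<Rightarrow> 'k) \<Rightarrow> bool" where
  "lin_fun V \<phi> \<longleftrightarrow> (\<forall>x y. \<phi> (vadd V x y) = \<phi> x + \<phi> y) \<and> (\<forall>c x. \<phi> (vsmult V c x) = c * \<phi> x)"

definition lin_map :: "('k::field, 'a, 'z) kvs_scheme \<Rightarrow> ('k, 'b, 'w) kvs_scheme \<Rightarrow> ('a \<Rightarrow> 'b) \<Rightarrow> bool" where
  "lin_map V W f \<longleftrightarrow> (\<forall>x y. f (vadd V x y) = vadd W (f x) (f y)) \<and>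
                       (\<forall>c x. f (vsmult V c x) = vsmult W c (f x))"

definition k_algebra :: "('k::field, 'a, 'z) kalg_scheme \<Rightarrow> bool" where
  "k_algebra A \<longleftrightarrow> vector_space A \<and>
     (\<forall>x y z. amult A (amult A x y) z = amult A x (amult A y z)) \<and>
     (\<forall>x. amult A (aone A) x = x) \<and> (\<forall>x. amult A x (aone A) = x) \<and>
     (\<forall>x y z. amult A x (vadd A y z) = vadd A (amult A x y) (amult A x z)) \<and>
     (\<forall>x y z. amult A (vadd A x y) z = vadd A (amult A x z) (amult A y z)) \<and>
     (\<forall>c x y. amult A (vsmult A c x) y = vsmult A c (amult A x y)) \<and>
     (\<forall>c x y. amult A x (vsmult A c y) = vsmult A c (amult A x y))"

definition ev2 :: "('a \<Rightarrow> 'k::field) \<Rightarrow> ('b \<Rightarrow> 'k) \<Rightarrow> ('a \<times> 'b) list \<Rightarrow> 'k" where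
  "ev2 \<phi> \<psi> t = (\<Sum>(x, y)\<leftarrow>t. \<phi> x * \<psi> y)"

definition bialgebra :: "('k::field, 'a, 'z) hopf_scheme \<Rightarrow> bool" where
  "bialgebra H \<longleftrightarrow> k_algebra H \<and>
     \<comment> \<open>comultiplication is linear\<close>
     (\<forall>\<phi> \<psi>. lin_fun H \<phi> \<and> lin_fun H \<psi> \<longrightarrow>
        (\<forall>x y. ev2 \<phi> \<psi> (comul H (vadd H x y)) = ev2 \<phi> \<psi> (comul H x) + ev2 \<phi> \<psi> (comul H y)) \<and>
        (\<forall>c x. ev2 \<phi> \<psi> (comul H (vsmult H c x)) = c * ev2 \<phi> \<psi> (comul H x))) \<and>
     \<comment> \<open>coassociativity\<close>
     (\<forall>\<phi>1 \<phi>2 \<phi>3. lin_fun H \<phi>1 \<and> lin_fun H \<phi>2 \<and> lin_fun H \<phi>3 \<longrightarrow>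
        (\<forall>a. (\<Sum>(x, y)\<leftarrow>comul H a. ev2 \<phi>1 \<phi>2 (comul H x) * \<phi>3 y) =
             (\<Sum>(x, y)\<leftarrow>comul H a. \<phi>1 x * ev2 \<phi>2 \<phi>3 (comul H y)))) \<and>
     \<comment> \<open>counit\<close>
     lin_fun H (counit H) \<and>
     (\<forall>a. vsum H (map (\<lambda>(x, y). vsmult H (counit H x) y) (comul H a)) = a) \<and>
     (\<forall>a. vsum H (map (\<lambda>(x, y). vsmult H (counit H y) x) (comul H a)) = a) \<and>
     \<comment> \<open>comultiplication and counit are algebra maps\<close>
     (\<forall>\<phi> \<psi>. lin_fun H \<phi> \<and> lin_fun H \<psi> \<longrightarrow>
        (\<forall>a b. ev2 \<phi> \<psi> (comul H (amult H a b)) =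
               (\<Sum>(x, y)\<leftarrow>comul H a. \<Sum>(x', y')\<leftarrow>comul H b. \<phi> (amult H x x') * \<psi> (amult H y y'))) \<and>
        ev2 \<phi> \<psi> (comul H (aone H)) = \<phi> (aone H) * \<psi> (aone H)) \<and>
     (\<forall>a b. counit H (amult H a b) = counit H a * counit H b) \<and>
     counit H (aone H) = 1"

definition hopf_algebra :: "('k::field, 'a, 'z) hopf_scheme \<Rightarrow> bool" where
  "hopf_algebra H \<longleftrightarrow> bialgebra H \<and> lin_map H H (antipode H) \<and>
     (\<forall>a. vsum H (map (\<lambda>(x, y). amult H (antipode H x) y) (comul H a)) = vsmult H (counit H a) (aone H)) \<and>
     (\<forall>a. vsum H (map (\<lambda>(x, y). amult H x (antipode H y)) (comul H a)) = vsmult H (counit H a) (aone H))"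

text \<open>Morphism of Hopf algebras (= bialgebra morphism; compatibility with antipodes is automatic).\<close>
definition hopf_hom :: "('k::field, 'a, 'z) hopf_scheme \<Rightarrow> ('k, 'b, 'w) hopf_scheme \<Rightarrow> ('a \<Rightarrow> 'b) \<Rightarrow> bool" where
  "hopf_hom A H f \<longleftrightarrow> lin_map A H f \<and>
     (\<forall>x y. f (amult A x y) = amult H (f x) (f y)) \<and> f (aone A) = aone H \<and>
     (\<forall>\<phi> \<psi>. lin_fun H \<phi> \<and> lin_fun H \<psi> \<longrightarrow>
        (\<forall>a. ev2 \<phi> \<psi> (comul H (f a)) = ev2 (\<phi> \<circ> f) (\<psi> \<circ> f) (comul A a))) \<and>
     (\<forall>a. counit H (f a) = counit A a)"

definition exact_hopf_seq ::
  "('k::field, 'b, 'z1) hopf_scheme \<Rightarrow> ('k, 'a, 'z2) hopf_scheme \<Rightarrow> ('k, 'h, 'z3) hopf_scheme \<Rightarrow>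
   ('b \<Rightarrow> 'a) \<Rightarrow> ('a \<Rightarrow> 'h) \<Rightarrow> bool" where
  "exact_hopf_seq B A H i p \<longleftrightarrow>
     hopf_algebra B \<and> hopf_algebra A \<and> hopf_algebra H \<and>
     hopf_hom B A i \<and> hopf_hom A H p \<and> inj i \<and> surj p \<and>
     \<comment> \<open>ker p = i(B)^+ A\<close>
     {a. p a = vzero H} =
       {vsum A (map (\<lambda>(b, x). amult A (i b) x) l) | l. \<forall>(b, x)\<in>set l. counit B b = 0} \<and>
     \<comment> \<open>ker p = A i(B)^+\<close>
     {a. p a = vzero H} =
       {vsum A (map (\<lambda>(b, x). amult A x (i b)) l) | l. \<forall>(b, x)\<in>set l. counit B b = 0} \<and>
     \<comment> \<open>i(B) = {a. a_(1) (x) p(a_(2)) = a (x) 1}\<close>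
     range i = {a. \<forall>\<phi> \<psi>. lin_fun A \<phi> \<and> lin_fun H \<psi> \<longrightarrow>
                      (\<Sum>(x, y)\<leftarrow>comul A a. \<phi> x * \<psi> (p y)) = \<phi> a * \<psi> (aone H)} \<and>
     \<comment> \<open>i(B) = {a. p(a_(1)) (x) a_(2) = 1 (x) a}\<close>
     range i = {a. \<forall>\<psi> \<phi>. lin_fun H \<psi> \<and> lin_fun A \<phi> \<longrightarrow>
                      (\<Sum>(x, y)\<leftarrow>comul A a. \<psi> (p x) * \<phi> y) = \<psi> (aone H) * \<phi> a}"

record ('a, 'm) lmod =
  mcarrier :: "'m set"
  madd  :: "'m \<Rightarrow> 'm \<Rightarrow> 'm"
  mzero :: "'m"
  act   :: "'a \<Rightarrow> 'm \<Rightarrow> 'm"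

definition msum :: "('a, 'm) lmod \<Rightarrow> 'm list \<Rightarrow> 'm" where
  "msum M xs = foldr (madd M) xs (mzero M)"

text \<open>Left module over a k-algebra A (the k-structure is the one induced via k -> A).\<close>
definition lmodule :: "('k::field, 'a, 'z) kalg_scheme \<Rightarrow> ('a, 'm) lmod \<Rightarrow> bool" where
  "lmodule A M \<longleftrightarrow>
     mzero M \<in> mcarrier M \<and>
     (\<forall>x\<in>mcarrier M. \<forall>y\<in>mcarrier M. madd M x y \<in> mcarrier M) \<and>
     (\<forall>a. \<forall>x\<in>mcarrier M. act M a x \<in> mcarrier M) \<and>
     (\<forall>x\<in>mcarrier M. \<forall>y\<in>mcarrier M. \<forall>z\<in>mcarrier M. madd M (madd M x y) z = madd M x (madd M y z)) \<and>
     (\<forall>x\<in>mcarrier M. \<forall>y\<in>mcarrier M. madd M x y = madd M y x) \<and>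
     (\<forall>x\<in>mcarrier M. madd M x (mzero M) = x) \<and>
     (\<forall>x\<in>mcarrier M. madd M x (act M (vsmult A (-1) (aone A)) x) = mzero M) \<and>
     (\<forall>a b. \<forall>x\<in>mcarrier M. act M (vadd A a b) x = madd M (act M a x) (act M b x)) \<and>
     (\<forall>a. \<forall>x\<in>mcarrier M. \<forall>y\<in>mcarrier M. act M a (madd M x y) = madd M (act M a x) (act M a y)) \<and>
     (\<forall>a b. \<forall>x\<in>mcarrier M. act M (amult A a b) x = act M a (act M b x)) \<and>
     (\<forall>x\<in>mcarrier M. act M (aone A) x = x)"

definition mod_hom :: "('a, 'm) lmod \<Rightarrow> ('a, 'n) lmod \<Rightarrow> ('m \<Rightarrow> 'n) \<Rightarrow> bool" where
  "mod_hom M N f \<longleftrightarrow> f ` mcarrier M \<subseteq> mcarrier N \<and>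
     (\<forall>x\<in>mcarrier M. \<forall>y\<in>mcarrier M. f (madd M x y) = madd N (f x) (f y)) \<and>
     (\<forall>a. \<forall>x\<in>mcarrier M. f (act M a x) = act N a (f x))"

definition free_mod :: "('k::field, 'a, 'z) kalg_scheme \<Rightarrow> 'x set \<Rightarrow> ('a, 'x \<Rightarrow> 'a) lmod" where
  "free_mod A X =
     \<lparr> mcarrier = {f. finite {x. f x \<noteq> vzero A} \<and> {x. f x \<noteq> vzero A} \<subseteq> X},
       madd = (\<lambda>f g x. vadd A (f x) (g x)),
       mzero = (\<lambda>x. vzero A),
       act = (\<lambda>a f x. amult A a (f x)) \<rparr>"

text \<open>Projective module: a direct summand (retract) of a free module.  It suffices to use the
  free module on the underlying set of M (every projective M is a retract of it).\<close>
definition projective :: "('k::field, 'a, 'z) kalg_scheme \<Rightarrow> ('a, 'm) lmod \<Rightarrow> bool" where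
  "projective A M \<longleftrightarrow> lmodule A M \<and>
     (\<exists>s r. mod_hom M (free_mod A (mcarrier M)) s \<and> mod_hom (free_mod A (mcarrier M)) M r \<and>
            (\<forall>x\<in>mcarrier M. r (s x) = x))"

definition aug_sub :: "('k::field, 'b, 'z) hopf_scheme \<Rightarrow> ('b \<Rightarrow> 'a) \<Rightarrow> ('a, 'm) lmod \<Rightarrow> 'm set" where
  "aug_sub B i M = {msum M (map (\<lambda>(b, x). act M (i b) x) l) | l.
                      \<forall>(b, x)\<in>set l. counit B b = 0 \<and> x \<in> mcarrier M}"

definition coset_of :: "('a, 'm) lmod \<Rightarrow> 'm set \<Rightarrow> 'm \<Rightarrow> 'm set" where
  "coset_of M K x = {madd M x u | u. u \<in> K}"

definition quot_mod :: "('k::field, 'b, 'z) hopf_scheme \<Rightarrow> ('b \<Rightarrow> 'a) \<Rightarrow> ('a \<Rightarrow> 'h) \<Rightarrow> ('a, 'm) lmod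
                        \<Rightarrow> ('h, 'm set) lmod" where
  "quot_mod B i p M =
     (let K = aug_sub B i M; \<pi> = coset_of M K in
      \<lparr> mcarrier = \<pi> ` mcarrier M,
        madd = (\<lambda>X Y. \<pi> (madd M (SOME x. x \<in> X) (SOME y. y \<in> Y))),
        mzero = \<pi> (mzero M),
        act = (\<lambda>h X. \<pi> (act M (SOME a. p a = h) (SOME x. x \<in> X))) \<rparr>)"

text \<open>A projective resolution  ... -> P 2 -d 1-> P 1 -d 0-> P 0 -e-> N -> 0  of left H-modules.\<close>
definition proj_resolution ::
  "('k::field, 'h, 'z) kalg_scheme \<Rightarrow> ('h, 'n) lmod \<Rightarrow> (nat \<Rightarrow> ('h, 'c) lmod) \<Rightarrow> (nat \<Rightarrow> 'c \<Rightarrow> 'c)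
   \<Rightarrow> ('c \<Rightarrow> 'n) \<Rightarrow> bool" where
  "proj_resolution H N P d e \<longleftrightarrow>
     (\<forall>n. projective H (P n)) \<and>
     (\<forall>n. mod_hom (P (Suc n)) (P n) (d n)) \<and>
     mod_hom (P 0) N e \<and>
     e ` mcarrier (P 0) = mcarrier N \<and>
     {x \<in> mcarrier (P 0). e x = mzero N} = d 0 ` mcarrier (P 1) \<and>
     (\<forall>n. {x \<in> mcarrier (P (Suc n)). d n x = mzero (P n)} = d (Suc n) ` mcarrier (P (Suc (Suc n))))"

text \<open>H^+ P, the submodule spanned by h x with epsilon(h) = 0; k_epsilon (x)_H P = P / H^+ P.\<close>
definition aug_mod :: "('k::field, 'h, 'z) hopf_scheme \<Rightarrow> ('h, 'c) lmod \<Rightarrow> 'c set" where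
  "aug_mod H P = {msum P (map (\<lambda>(h, x). act P h x) l) | l.
                    \<forall>(h, x)\<in>set l. counit H h = 0 \<and> x \<in> mcarrier P}"

text \<open>Vanishing of the n-th homology (n \<ge> 1) of the complex k_epsilon (x)_H P = P / H^+ P,
  i.e. Tor^H_n(k_epsilon, N) = 0 when P is a projective resolution of N:
  every cycle of P_n / H^+P_n is a boundary.\<close>
definition tor_homology_vanishes ::
  "('k::field, 'h, 'z) hopf_scheme \<Rightarrow> (nat \<Rightarrow> ('h, 'c) lmod) \<Rightarrow> (nat \<Rightarrow> 'c \<Rightarrow> 'c) \<Rightarrow> nat \<Rightarrow> bool" where
  "tor_homology_vanishes H P d n \<longleftrightarrow>
     (case n of 0 \<Rightarrow> True
      | Suc m \<Rightarrow>
         {x \<in> mcarrier (P (Suc m)). d m x \<in> aug_mod H (P m)} \<subseteq>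
         {madd (P (Suc m)) (d (Suc m) y) u | y u. y \<in> mcarrier (P (Suc (Suc m))) \<and> u \<in> aug_mod H (P (Suc m))})"

end

theory Submission
  imports Defs "HOL-Algebra.FiniteProduct"
begin


definition Gm :: "('a,'m) lmod \<Rightarrow> 'm monoid" where
  "Gm X = \<lparr>carrier = mcarrier X, mult = madd X, one = mzero X\<rparr>"

definition fsum :: "('a,'m) lmod \<Rightarrow> ('x \<Rightarrow> 'm) \<Rightarrow> 'x set \<Rightarrow> 'm" where
  "fsum X f S = finprod (Gm X) f S"

definition mneg :: "('k::field, 'a, 'z) kalg_scheme \<Rightarrow> ('a,'m) lmod \<Rightarrow> 'm \<Rightarrow> 'm" where
  "mneg R X x = act X (vsmult R (-1) (aone R)) x"

lemma Gm_simps[simp]: "carrier (Gm X) = mcarrier X" "mult (Gm X) = madd X" "one (Gm X) = mzero X"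
  by (auto simp: Gm_def)

lemma lm_cm: "lmodule R X \<Longrightarrow> comm_monoid (Gm X)"
  unfolding comm_monoid_def monoid_def comm_monoid_axioms_def Gm_def lmodule_def
  by auto

context
  fixes R :: "('k::field, 'a, 'z) kalg_scheme" and X :: "('a,'m) lmod"
  assumes lm: "lmodule R X"
begin

lemma lm_zero[simp]: "mzero X \<in> mcarrier X" using lm unfolding lmodule_def by auto
lemma lm_add[simp]: "x \<in> mcarrier X \<Longrightarrow> y \<in> mcarrier X \<Longrightarrow> madd X x y \<in> mcarrier X"
  using lm unfolding lmodule_def by auto
lemma lm_act[simp]: "x \<in> mcarrier X \<Longrightarrow> act X a x \<in> mcarrier X"
  using lm unfolding lmodule_def by auto
lemma lm_assoc: "x \<in> mcarrier X \<Longrightarrow> y \<in> mcarrier X \<Longrightarrow> z \<in> mcarrier X \<Longrightarrow>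
   madd X (madd X x y) z = madd X x (madd X y z)"
  using lm unfolding lmodule_def by auto
lemma lm_comm: "x \<in> mcarrier X \<Longrightarrow> y \<in> mcarrier X \<Longrightarrow> madd X x y = madd X y x"
  using lm unfolding lmodule_def by auto
lemma lm_r0[simp]: "x \<in> mcarrier X \<Longrightarrow> madd X x (mzero X) = x"
  using lm unfolding lmodule_def by auto
lemma lm_l0[simp]: "x \<in> mcarrier X \<Longrightarrow> madd X (mzero X) x = x"
  using lm_r0 lm_comm lm_zero by metis
lemma lm_neg[simp]: "x \<in> mcarrier X \<Longrightarrow> madd X x (mneg R X x) = mzero X"
  using lm unfolding lmodule_def mneg_def by auto
lemma lm_negl[simp]: "x \<in> mcarrier X \<Longrightarrow> madd X (mneg R X x) x = mzero X"
  using lm_neg lm_comm by (metis lm_act mneg_def)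
lemma lm_negc[simp]: "x \<in> mcarrier X \<Longrightarrow> mneg R X x \<in> mcarrier X"
  unfolding mneg_def by simp
lemma lm_distl: "x \<in> mcarrier X \<Longrightarrow> act X (vadd R a b) x = madd X (act X a x) (act X b x)"
  using lm unfolding lmodule_def by auto
lemma lm_distr: "x \<in> mcarrier X \<Longrightarrow> y \<in> mcarrier X \<Longrightarrow> act X a (madd X x y) = madd X (act X a x) (act X a y)"
  using lm unfolding lmodule_def by auto
lemma lm_mult: "x \<in> mcarrier X \<Longrightarrow> act X (amult R a b) x = act X a (act X b x)"
  using lm unfolding lmodule_def by auto
lemma lm_one[simp]: "x \<in> mcarrier X \<Longrightarrow> act X (aone R) x = x"
  using lm unfolding lmodule_def by auto

lemma lm_cancel: assumes "x \<in> mcarrier X" "y \<in> mcarrier X" "z \<in> mcarrier X"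
  "madd X x z = madd X y z" shows "x = y"
proof -
  have "x = madd X x (madd X z (mneg R X z))" using assms(1-3) by simp
  also have "\<dots> = madd X (madd X x z) (mneg R X z)" using assms(1-3) by (simp add: lm_assoc)
  also have "\<dots> = madd X (madd X y z) (mneg R X z)" by (simp only: assms(4))
  also have "\<dots> = madd X y (madd X z (mneg R X z))" using assms(1-3) by (simp add: lm_assoc)
  also have "\<dots> = y" using assms(1-3) by simp
  finally show ?thesis .
qed

lemma lm_idem: "x \<in> mcarrier X \<Longrightarrow> madd X x x = x \<Longrightarrow> x = mzero X"
  using lm_cancel[of x "mzero X" x] by simp

lemma lm_act0[simp]: "act X a (mzero X) = mzero X"
proof -
  have "madd X (act X a (mzero X)) (act X a (mzero X)) = act X a (mzero X)"
    using lm_distr[of "mzero X" "mzero X" a] by simp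
  thus ?thesis using lm_idem by simp
qed

lemma lm_neg_eq: "x \<in> mcarrier X \<Longrightarrow> y \<in> mcarrier X \<Longrightarrow> madd X x y = mzero X \<Longrightarrow> y = mneg R X x"
  using lm_cancel[of y "mneg R X x" x] by (simp add: lm_comm)

lemma lm_neg_add: "x \<in> mcarrier X \<Longrightarrow> y \<in> mcarrier X \<Longrightarrow>
   mneg R X (madd X x y) = madd X (mneg R X x) (mneg R X y)"
  unfolding mneg_def by (simp add: lm_distr)

lemma lm_sub_self: "x \<in> mcarrier X \<Longrightarrow> y \<in> mcarrier X \<Longrightarrow> madd X (madd X x (mneg R X y)) y = x"
  by (simp add: lm_assoc)

lemma fsum_closed[simp]: "(\<And>x. x \<in> S \<Longrightarrow> f x \<in> mcarrier X) \<Longrightarrow> fsum X f S \<in> mcarrier X"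
proof -
  interpret comm_monoid "Gm X" using lm_cm[OF lm] .
  assume "\<And>x. x \<in> S \<Longrightarrow> f x \<in> mcarrier X"
  thus ?thesis unfolding fsum_def using finprod_closed[of f S] by (auto simp: Pi_def)
qed

lemma fsum_empty[simp]: "fsum X f {} = mzero X"
proof -
  interpret comm_monoid "Gm X" using lm_cm[OF lm] .
  show ?thesis unfolding fsum_def by simp
qed

lemma fsum_insert: "finite S \<Longrightarrow> a \<notin> S \<Longrightarrow> (\<And>x. x \<in> insert a S \<Longrightarrow> f x \<in> mcarrier X) \<Longrightarrow>
   fsum X f (insert a S) = madd X (f a) (fsum X f S)"
proof -
  interpret comm_monoid "Gm X" using lm_cm[OF lm] .
  assume "finite S" "a \<notin> S" "\<And>x. x \<in> insert a S \<Longrightarrow> f x \<in> mcarrier X"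
  thus ?thesis unfolding fsum_def by (subst finprod_insert) auto
qed

lemma fsum_addf: "(\<And>x. x \<in> S \<Longrightarrow> f x \<in> mcarrier X) \<Longrightarrow> (\<And>x. x \<in> S \<Longrightarrow> g x \<in> mcarrier X) \<Longrightarrow>
  fsum X (\<lambda>x. madd X (f x) (g x)) S = madd X (fsum X f S) (fsum X g S)"
proof -
  interpret comm_monoid "Gm X" using lm_cm[OF lm] .
  assume "\<And>x. x \<in> S \<Longrightarrow> f x \<in> mcarrier X" "\<And>x. x \<in> S \<Longrightarrow> g x \<in> mcarrier X"
  thus ?thesis unfolding fsum_def using finprod_multf[of f S g]
    by (auto simp: Pi_def)
qed

lemma fsum_cong: "S = T \<Longrightarrow> (\<And>x. x \<in> T \<Longrightarrow> f x = g x) \<Longrightarrow> (\<And>x. x \<in> T \<Longrightarrow> g x \<in> mcarrier X) \<Longrightarrow>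
  fsum X f S = fsum X g T"
proof -
  interpret comm_monoid "Gm X" using lm_cm[OF lm] .
  assume "S = T" "\<And>x. x \<in> T \<Longrightarrow> f x = g x" "\<And>x. x \<in> T \<Longrightarrow> g x \<in> mcarrier X"
  thus ?thesis unfolding fsum_def by (intro finprod_cong) (auto simp: Pi_def simp_implies_def)
qed

lemma fsum_mono_neutral: "finite T \<Longrightarrow> S \<subseteq> T \<Longrightarrow> (\<And>x. x \<in> T - S \<Longrightarrow> f x = mzero X) \<Longrightarrow>
   (\<And>x. x \<in> T \<Longrightarrow> f x \<in> mcarrier X) \<Longrightarrow> fsum X f T = fsum X f S"
proof -
  interpret comm_monoid "Gm X" using lm_cm[OF lm] .
  assume a: "finite T" "S \<subseteq> T" "\<And>x. x \<in> T - S \<Longrightarrow> f x = mzero X" "\<And>x. x \<in> T \<Longrightarrow> f x \<in> mcarrier X"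
  show ?thesis unfolding fsum_def
    by (rule finprod_mono_neutral_cong_left[symmetric]) (use a in \<open>auto simp: Gm_def Pi_def\<close>)
qed

lemma fsum_act: "finite S \<Longrightarrow> (\<And>x. x \<in> S \<Longrightarrow> f x \<in> mcarrier X) \<Longrightarrow>
   act X a (fsum X f S) = fsum X (\<lambda>x. act X a (f x)) S"
proof (induction S rule: finite_induct)
  case empty thus ?case by simp
next
  case (insert y S)
  have c: "\<And>x. x \<in> insert y S \<Longrightarrow> f x \<in> mcarrier X" by fact
  have "act X a (fsum X f (insert y S)) = act X a (madd X (f y) (fsum X f S))"
    using fsum_insert[OF insert(1,2) c] by simp
  also have "\<dots> = madd X (act X a (f y)) (act X a (fsum X f S))"
    using c by (simp add: lm_distr)
  also have "\<dots> = fsum X (\<lambda>x. act X a (f x)) (insert y S)"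
    using fsum_insert[OF insert(1,2), of "\<lambda>x. act X a (f x)"] c insert(3) by simp
  finally show ?case .
qed

end

context
  fixes R :: "('k::field, 'a, 'z) kalg_scheme"
  assumes kR: "k_algebra R"
begin

lemma ka_vs: "vector_space R" using kR unfolding k_algebra_def by auto

lemma va_assoc: "vadd R (vadd R x y) z = vadd R x (vadd R y z)" using ka_vs unfolding vector_space_def by auto
lemma va_comm: "vadd R x y = vadd R y x" using ka_vs unfolding vector_space_def by auto
lemma va_r0[simp]: "vadd R x (vzero R) = x" using ka_vs unfolding vector_space_def by auto
lemma va_l0[simp]: "vadd R (vzero R) x = x" using va_r0 va_comm by metis
lemma va_neg: "vadd R x (vsmult R (-1) x) = vzero R" using ka_vs unfolding vector_space_def by auto
lemma vs_distr: "vsmult R (c + d) x = vadd R (vsmult R c x) (vsmult R d x)" using ka_vs unfolding vector_space_def by auto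
lemma vs_distl: "vsmult R c (vadd R x y) = vadd R (vsmult R c x) (vsmult R c y)" using ka_vs unfolding vector_space_def by auto

lemma va_idem: assumes "vadd R y y = y" shows "y = vzero R"
proof -
  have "y = vadd R y (vadd R y (vsmult R (-1) y))" by (simp add: va_neg)
  also have "\<dots> = vadd R (vadd R y y) (vsmult R (-1) y)" by (simp add: va_assoc)
  also have "\<dots> = vzero R" using assms by (simp add: va_neg)
  finally show ?thesis .
qed

lemma vs_zero[simp]: "vsmult R 0 x = vzero R"
  using vs_distr[of 0 0 x] va_idem by simp

lemma am_r0[simp]: "amult R a (vzero R) = vzero R"
proof -
  have "amult R a (vzero R) = amult R a (vsmult R 0 (vzero R))" by simp
  also have "\<dots> = vsmult R 0 (amult R a (vzero R))" using kR unfolding k_algebra_def by blast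
  finally show ?thesis by simp
qed

lemma am_l0[simp]: "amult R (vzero R) a = vzero R"
proof -
  have "amult R (vzero R) a = amult R (vsmult R 0 (vzero R)) a" by simp
  also have "\<dots> = vsmult R 0 (amult R (vzero R) a)" using kR unfolding k_algebra_def by blast
  finally show ?thesis by simp
qed

lemma am_r1[simp]: "amult R a (aone R) = a" using kR unfolding k_algebra_def by auto
lemma am_l1[simp]: "amult R (aone R) a = a" using kR unfolding k_algebra_def by auto
lemma am_assoc: "amult R (amult R x y) z = amult R x (amult R y z)" using kR unfolding k_algebra_def by auto
lemma am_distr: "amult R x (vadd R y z) = vadd R (amult R x y) (amult R x z)" using kR unfolding k_algebra_def by auto
lemma am_distl: "amult R (vadd R x y) z = vadd R (amult R x z) (amult R y z)" using kR unfolding k_algebra_def by auto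
lemma am_sl: "amult R (vsmult R c x) y = vsmult R c (amult R x y)" using kR unfolding k_algebra_def by auto
lemma am_sr: "amult R x (vsmult R c y) = vsmult R c (amult R x y)" using kR unfolding k_algebra_def by auto

lemma neg1_comm: "amult R (vsmult R (-1) (aone R)) a = amult R a (vsmult R (-1) (aone R))"
  by (simp add: am_sl am_sr)

lemma lm_actz[simp]: assumes lm: "lmodule R X" and x: "x \<in> mcarrier X"
  shows "act X (vzero R) x = mzero X"
proof -
  have "madd X (act X (vzero R) x) (act X (vzero R) x) = act X (vzero R) x"
    using lm_distl[OF lm x, of "vzero R" "vzero R"] by simp
  thus ?thesis using lm_idem[OF lm] lm_act[OF lm x] by blast
qed

lemma lm_neg_act: assumes lm: "lmodule R X" and x: "x \<in> mcarrier X"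
  shows "mneg R X (act X a x) = act X a (mneg R X x)"
  unfolding mneg_def using lm_mult[OF lm x] neg1_comm by metis

end

lemma hom_zero: assumes "lmodule R X" "lmodule R Y" "mod_hom X Y f"
  shows "f (mzero X) = mzero Y"
proof -
  have c: "f (mzero X) \<in> mcarrier Y" using assms(3) lm_zero[OF assms(1)] unfolding mod_hom_def by auto
  have "madd Y (f (mzero X)) (f (mzero X)) = f (mzero X)"
    using assms(3) lm_zero[OF assms(1)] lm_r0[OF assms(1)] unfolding mod_hom_def by metis
  thus ?thesis using lm_idem[OF assms(2) c] by simp
qed

lemma hom_car: "mod_hom X Y f \<Longrightarrow> x \<in> mcarrier X \<Longrightarrow> f x \<in> mcarrier Y"
  unfolding mod_hom_def by auto
lemma hom_add: "mod_hom X Y f \<Longrightarrow> x \<in> mcarrier X \<Longrightarrow> y \<in> mcarrier X \<Longrightarrow> f (madd X x y) = madd Y (f x) (f y)"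
  unfolding mod_hom_def by auto
lemma hom_act: "mod_hom X Y f \<Longrightarrow> x \<in> mcarrier X \<Longrightarrow> f (act X a x) = act Y a (f x)"
  unfolding mod_hom_def by auto

lemma hom_neg: "mod_hom X Y f \<Longrightarrow> x \<in> mcarrier X \<Longrightarrow> f (mneg R X x) = mneg R Y (f x)"
  unfolding mod_hom_def mneg_def by auto




definition supp :: "('k::field, 'a, 'z) kalg_scheme \<Rightarrow> ('x \<Rightarrow> 'a) \<Rightarrow> 'x set" where
  "supp R Fn = {x. Fn x \<noteq> vzero R}"

lemma lifting:
  fixes R :: "('k::field, 'a, 'z) kalg_scheme" and Q :: "('a,'q) lmod" and X :: "('a,'x) lmod"
    and Y :: "('a,'y) lmod"
  assumes kR: "k_algebra R" and pQ: "projective R Q" and lX: "lmodule R X" and lY: "lmodule R Y"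
    and f: "mod_hom X Y f" and g: "mod_hom Q Y g" and sub: "g ` mcarrier Q \<subseteq> f ` mcarrier X"
  shows "\<exists>h. mod_hom Q X h \<and> (\<forall>q\<in>mcarrier Q. f (h q) = g q)"
proof -
  have lQ: "lmodule R Q" using pQ unfolding projective_def by auto
  define F where "F = free_mod R (mcarrier Q)"
  obtain s r where s: "mod_hom Q F s" and r: "mod_hom F Q r" and rs: "\<forall>x\<in>mcarrier Q. r (s x) = x"
    using pQ unfolding projective_def F_def by blast
  have Fc: "mcarrier F = {Fn. finite (supp R Fn) \<and> supp R Fn \<subseteq> mcarrier Q}"
    unfolding F_def free_mod_def supp_def by simp
  have Fadd: "madd F = (\<lambda>Fn Gn x. vadd R (Fn x) (Gn x))" unfolding F_def free_mod_def by simp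
  have Fact: "act F = (\<lambda>a Fn x. amult R a (Fn x))" unfolding F_def free_mod_def by simp
  have Fzero: "mzero F = (\<lambda>x. vzero R)" unfolding F_def free_mod_def by simp
  define ex :: "'q \<Rightarrow> 'q \<Rightarrow> 'a" where "ex x = (\<lambda>y. if y = x then aone R else vzero R)" for x
  have ex_supp: "supp R (ex x) \<subseteq> {x}" for x unfolding ex_def supp_def by auto
  have exF: "x \<in> mcarrier Q \<Longrightarrow> ex x \<in> mcarrier F" for x
    using ex_supp[of x] finite_subset[OF ex_supp] unfolding Fc by auto
  have "\<forall>x\<in>mcarrier Q. \<exists>c. c \<in> mcarrier X \<and> f c = g (r (ex x))"
  proof
    fix x assume x: "x \<in> mcarrier Q"
    have "r (ex x) \<in> mcarrier Q" using hom_car[OF r exF[OF x]] .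
    then show "\<exists>c. c \<in> mcarrier X \<and> f c = g (r (ex x))" using sub by force
  qed
  then obtain c where c: "\<And>x. x \<in> mcarrier Q \<Longrightarrow> c x \<in> mcarrier X \<and> f (c x) = g (r (ex x))"
    by metis
  have cc: "\<And>x. x \<in> mcarrier Q \<Longrightarrow> c x \<in> mcarrier X" using c by blast
  define \<Phi> where "\<Phi> Fn = fsum X (\<lambda>x. act X (Fn x) (c x)) (supp R Fn)" for Fn
  have Phi_T: "\<Phi> Fn = fsum X (\<lambda>x. act X (Fn x) (c x)) T"
    if "Fn \<in> mcarrier F" "finite T" "supp R Fn \<subseteq> T" "T \<subseteq> mcarrier Q" for Fn T
    unfolding \<Phi>_def
  proof (rule fsum_mono_neutral[OF lX, symmetric])
    show "finite T" by fact
    show "supp R Fn \<subseteq> T" by fact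
    show "\<And>x. x \<in> T - supp R Fn \<Longrightarrow> act X (Fn x) (c x) = mzero X"
      using that c lm_actz[OF kR lX] unfolding supp_def by auto
    show "\<And>x. x \<in> T \<Longrightarrow> act X (Fn x) (c x) \<in> mcarrier X" using that c lm_act[OF lX] by auto
  qed
  have Phi_c: "\<Phi> Fn \<in> mcarrier X" if "Fn \<in> mcarrier F" for Fn
    unfolding \<Phi>_def using that c lm_act[OF lX] unfolding Fc by (intro fsum_closed[OF lX]) auto
  have addF: "madd F Fn Gn \<in> mcarrier F" if "Fn \<in> mcarrier F" "Gn \<in> mcarrier F" for Fn Gn
  proof -
    have "supp R (madd F Fn Gn) \<subseteq> supp R Fn \<union> supp R Gn" unfolding supp_def Fadd using va_r0[OF kR] by auto
    thus ?thesis using that unfolding Fc by (auto intro: finite_subset)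
  qed
  have actF: "act F a Fn \<in> mcarrier F" if "Fn \<in> mcarrier F" for Fn a
  proof -
    have "supp R (act F a Fn) \<subseteq> supp R Fn" unfolding supp_def Fact using am_r0[OF kR] by auto
    thus ?thesis using that unfolding Fc by (auto intro: finite_subset)
  qed
  have Phi_add: "\<Phi> (madd F Fn Gn) = madd X (\<Phi> Fn) (\<Phi> Gn)"
    if Fn: "Fn \<in> mcarrier F" and Gn: "Gn \<in> mcarrier F" for Fn Gn
  proof -
    let ?T = "supp R Fn \<union> supp R Gn"
    have T: "finite ?T" "?T \<subseteq> mcarrier Q" using Fn Gn unfolding Fc by auto
    have "supp R (madd F Fn Gn) \<subseteq> ?T" unfolding supp_def Fadd using va_r0[OF kR] by auto
    hence "\<Phi> (madd F Fn Gn) = fsum X (\<lambda>x. act X (madd F Fn Gn x) (c x)) ?T"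
      using Phi_T[OF addF[OF Fn Gn] T(1) _ T(2)] by simp
    also have "\<dots> = fsum X (\<lambda>x. madd X (act X (Fn x) (c x)) (act X (Gn x) (c x))) ?T"
      using T(2) c lm_distl[OF lX] unfolding Fadd
      by (intro fsum_cong[OF lX]) (use cc in \<open>auto simp: lm_add[OF lX] lm_act[OF lX] subset_iff\<close>)
    also have "\<dots> = madd X (fsum X (\<lambda>x. act X (Fn x) (c x)) ?T) (fsum X (\<lambda>x. act X (Gn x) (c x)) ?T)"
      using T(2) c by (intro fsum_addf[OF lX]) (use cc in \<open>auto simp: lm_act[OF lX] subset_iff\<close>)
    also have "\<dots> = madd X (\<Phi> Fn) (\<Phi> Gn)"
      using Phi_T[OF Fn T(1) _ T(2)] Phi_T[OF Gn T(1) _ T(2)] by simp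
    finally show ?thesis .
  qed
  have Phi_act: "\<Phi> (act F a Fn) = act X a (\<Phi> Fn)" if Fn: "Fn \<in> mcarrier F" for Fn a
  proof -
    let ?T = "supp R Fn"
    have T: "finite ?T" "?T \<subseteq> mcarrier Q" using Fn unfolding Fc by auto
    have "supp R (act F a Fn) \<subseteq> ?T" unfolding supp_def Fact using am_r0[OF kR] by auto
    hence "\<Phi> (act F a Fn) = fsum X (\<lambda>x. act X (act F a Fn x) (c x)) ?T"
      using Phi_T[OF actF[OF Fn] T(1) _ T(2)] by simp
    also have "\<dots> = fsum X (\<lambda>x. act X a (act X (Fn x) (c x))) ?T"
      using T(2) c lm_mult[OF lX] unfolding Fact
      by (intro fsum_cong[OF lX]) (use cc in \<open>auto simp: lm_act[OF lX] subset_iff\<close>)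
    also have "\<dots> = act X a (\<Phi> Fn)"
      unfolding \<Phi>_def using T c by (intro fsum_act[OF lX, symmetric]) (use cc in \<open>auto simp: lm_act[OF lX] subset_iff\<close>)
    finally show ?thesis .
  qed
  have Phi_ex: "\<Phi> (ex x) = c x" if x: "x \<in> mcarrier Q" for x
  proof -
    have "\<Phi> (ex x) = fsum X (\<lambda>y. act X (ex x y) (c y)) {x}"
      using Phi_T[OF exF[OF x] _ ex_supp] x by simp
    also have "\<dots> = c x" using fsum_insert[OF lX, of "{}" x "\<lambda>y. act X (ex x y) (c y)"] x cc[OF x]
      by (simp add: ex_def lm_one[OF lX] fsum_empty[OF lX] lm_r0[OF lX])
    finally show ?thesis .
  qed
  have zF: "mzero F \<in> mcarrier F" unfolding Fc Fzero supp_def by simp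
  have r0: "r (mzero F) = mzero Q"
  proof -
    have "madd F (mzero F) (mzero F) = mzero F" unfolding Fadd Fzero using va_r0[OF kR] by simp
    hence "madd Q (r (mzero F)) (r (mzero F)) = r (mzero F)" using hom_add[OF r zF zF] by simp
    thus ?thesis using lm_idem[OF lQ hom_car[OF r zF]] by simp
  qed
  have key: "\<forall>Fn. Fn \<in> mcarrier F \<longrightarrow> card (supp R Fn) = n \<longrightarrow> f (\<Phi> Fn) = g (r Fn)" for n
  proof (induction n)
    case 0
    show ?case
    proof (intro allI impI)
      fix Fn assume Fn: "Fn \<in> mcarrier F" and "card (supp R Fn) = 0"
      hence "supp R Fn = {}" unfolding Fc by auto
      hence e: "Fn = mzero F" unfolding supp_def Fzero by auto
      have "\<Phi> Fn = mzero X" unfolding \<Phi>_def e Fzero supp_def using fsum_empty[OF lX] by simp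
      thus "f (\<Phi> Fn) = g (r Fn)" unfolding e r0
        using hom_zero[OF lX lY f] hom_zero[OF lQ lY g] by simp
    qed
  next
    case (Suc n)
    show ?case
    proof (intro allI impI)
      fix Fn assume Fn: "Fn \<in> mcarrier F" and cd: "card (supp R Fn) = Suc n"
      then obtain x where xs: "x \<in> supp R Fn" by fastforce
      have x: "x \<in> mcarrier Q" using xs Fn unfolding Fc by auto
      define Fn' where "Fn' = Fn(x := vzero R)"
      have sF': "supp R Fn' = supp R Fn - {x}" unfolding Fn'_def supp_def by auto
      have Fn': "Fn' \<in> mcarrier F" using Fn sF' unfolding Fc by auto
      have cd': "card (supp R Fn') = n" using cd sF' xs Fn unfolding Fc by auto
      have IH: "f (\<Phi> Fn') = g (r Fn')" using Suc.IH Fn' cd' by blast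
      have aex: "act F (Fn x) (ex x) \<in> mcarrier F" using actF[OF exF[OF x]] .
      have dec: "Fn = madd F Fn' (act F (Fn x) (ex x))"
        unfolding Fadd Fact Fn'_def ex_def using am_r0[OF kR] am_r1[OF kR] va_r0[OF kR] va_l0[OF kR]
        by auto
      have cx: "c x \<in> mcarrier X" "f (c x) = g (r (ex x))" using c[OF x] by auto
      have "f (\<Phi> Fn) = f (madd X (\<Phi> Fn') (\<Phi> (act F (Fn x) (ex x))))"
        using Phi_add[OF Fn' aex] dec by simp
      also have "\<dots> = madd Y (f (\<Phi> Fn')) (f (act X (Fn x) (c x)))"
        using hom_add[OF f Phi_c[OF Fn'] Phi_c[OF aex]] Phi_act[OF exF[OF x]] Phi_ex[OF x] by simp
      also have "\<dots> = madd Y (g (r Fn')) (act Y (Fn x) (g (r (ex x))))"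
        using IH hom_act[OF f cx(1)] cx(2) by simp
      also have "\<dots> = madd Y (g (r Fn')) (g (r (act F (Fn x) (ex x))))"
        using hom_act[OF r exF[OF x]] hom_act[OF g hom_car[OF r exF[OF x]]] by simp
      also have "\<dots> = g (r Fn)"
        using dec hom_add[OF r Fn' aex] hom_add[OF g hom_car[OF r Fn'] hom_car[OF r aex]] by simp
      finally show "f (\<Phi> Fn) = g (r Fn)" .
    qed
  qed
  define h where "h q = \<Phi> (s q)" for q
  have H1: "mod_hom Q X h"
    unfolding mod_hom_def h_def
    using Phi_c hom_car[OF s] Phi_add hom_add[OF s] Phi_act hom_act[OF s] by auto
  have H2: "\<forall>q\<in>mcarrier Q. f (h q) = g q"
  proof
    fix q assume q: "q \<in> mcarrier Q"
    have "f (\<Phi> (s q)) = g (r (s q))" using key hom_car[OF s q] by blast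
    thus "f (h q) = g q" using rs q unfolding h_def by simp
  qed
  show ?thesis using H1 H2 by blast
qed




lemma msum_nil[simp]: "msum X [] = mzero X" unfolding msum_def by simp
lemma msum_cons[simp]: "msum X (x # xs) = madd X x (msum X xs)" unfolding msum_def by simp

context
  fixes R :: "('k::field, 'a, 'z) kalg_scheme" and X :: "('a,'m) lmod"
  assumes lm: "lmodule R X"
begin


lemma msum_closed: "set xs \<subseteq> mcarrier X \<Longrightarrow> msum X xs \<in> mcarrier X"
  by (induction xs) (auto simp: lm_add[OF lm] lm_zero[OF lm])

lemma msum_append: "set xs \<subseteq> mcarrier X \<Longrightarrow> set ys \<subseteq> mcarrier X \<Longrightarrow>
   msum X (xs @ ys) = madd X (msum X xs) (msum X ys)"
  by (induction xs) (auto simp: lm_l0[OF lm] msum_closed lm_assoc[OF lm])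

lemma act_msum: "set xs \<subseteq> mcarrier X \<Longrightarrow> act X a (msum X xs) = msum X (map (act X a) xs)"
  by (induction xs) (auto simp: lm_act0[OF lm] msum_closed lm_distr[OF lm])

end

lemma lm_swap: assumes lm: "lmodule R M" and c: "x \<in> mcarrier M" "u \<in> mcarrier M" "y \<in> mcarrier M" "v \<in> mcarrier M"
  shows "madd M (madd M x u) (madd M y v) = madd M (madd M x y) (madd M u v)"
proof -
  note [simp] = lm_add[OF lm] c
  have "madd M (madd M x u) (madd M y v) = madd M x (madd M u (madd M y v))" by (simp add: lm_assoc[OF lm])
  also have "madd M u (madd M y v) = madd M y (madd M u v)"
  proof -
    have "madd M u (madd M y v) = madd M (madd M u y) v" by (simp add: lm_assoc[OF lm])
    also have "\<dots> = madd M (madd M y u) v" using lm_comm[OF lm c(2) c(3)] by simp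
    also have "\<dots> = madd M y (madd M u v)" by (simp add: lm_assoc[OF lm])
    finally show ?thesis .
  qed
  also have "madd M x (madd M y (madd M u v)) = madd M (madd M x y) (madd M u v)" by (simp add: lm_assoc[OF lm])
  finally show ?thesis .
qed

lemma hom_msum: assumes "lmodule R X" "lmodule R Y" "mod_hom X Y f"
  shows "set xs \<subseteq> mcarrier X \<Longrightarrow> f (msum X xs) = msum Y (map f xs)"
  by (induction xs) (auto simp: hom_zero[OF assms] hom_add[OF assms(3)] msum_closed[OF assms(1)])

lemma hom_comp: "mod_hom X Y f \<Longrightarrow> mod_hom Y Z g \<Longrightarrow> mod_hom X Z (g \<circ> f)"
  unfolding mod_hom_def by (auto simp: image_subset_iff)

lemma hom_sub:
  fixes R :: "('k::field, 'a, 'z) kalg_scheme"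
  assumes kR: "k_algebra R" and lm: "lmodule R Q" and \<phi>: "mod_hom Q Q \<phi>"
  shows "mod_hom Q Q (\<lambda>w. madd Q w (mneg R Q (\<phi> w)))"
proof -
  have c: "\<And>w. w \<in> mcarrier Q \<Longrightarrow> \<phi> w \<in> mcarrier Q" using hom_car[OF \<phi>] .
  note [simp] = lm_add[OF lm] lm_negc[OF lm] c
  have "madd Q (madd Q x y) (mneg R Q (\<phi> (madd Q x y))) =
        madd Q (madd Q x (mneg R Q (\<phi> x))) (madd Q y (mneg R Q (\<phi> y)))"
    if "x \<in> mcarrier Q" "y \<in> mcarrier Q" for x y
  proof -
    have "\<phi> (madd Q x y) = madd Q (\<phi> x) (\<phi> y)" using hom_add[OF \<phi> that] .
    hence "mneg R Q (\<phi> (madd Q x y)) = madd Q (mneg R Q (\<phi> x)) (mneg R Q (\<phi> y))"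
      using lm_neg_add[OF lm] that by simp
    thus ?thesis using lm_swap[OF lm that(1) _ that(2), of "mneg R Q (\<phi> x)" "mneg R Q (\<phi> y)"] that by simp
  qed
  moreover have "madd Q (act Q a x) (mneg R Q (\<phi> (act Q a x))) = act Q a (madd Q x (mneg R Q (\<phi> x)))"
    if "x \<in> mcarrier Q" for x a
    using that hom_act[OF \<phi> that] lm_distr[OF lm] lm_neg_act[OF kR lm] by simp
  ultimately show ?thesis unfolding mod_hom_def by auto
qed

lemma image_lmodule:
  fixes R :: "('k::field, 'a, 'z) kalg_scheme"
  assumes lm: "lmodule R M" and car: "mcarrier N = \<pi> ` mcarrier M"
    and add: "\<And>x y. x \<in> mcarrier M \<Longrightarrow> y \<in> mcarrier M \<Longrightarrow> madd N (\<pi> x) (\<pi> y) = \<pi> (madd M x y)"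
    and zero: "mzero N = \<pi> (mzero M)"
    and ac: "\<And>a x. x \<in> mcarrier M \<Longrightarrow> act N a (\<pi> x) = \<pi> (act M a x)"
  shows "lmodule R N"
proof -
  note [simp] = lm_add[OF lm] lm_act[OF lm] add ac car lm_zero[OF lm]
  have "\<forall>x\<in>mcarrier M. \<forall>y\<in>mcarrier M. \<forall>z\<in>mcarrier M.
     madd N (madd N (\<pi> x) (\<pi> y)) (\<pi> z) = madd N (\<pi> x) (madd N (\<pi> y) (\<pi> z))"
    by (simp add: lm_assoc[OF lm])
  moreover have "\<forall>x\<in>mcarrier M. \<forall>y\<in>mcarrier M. madd N (\<pi> x) (\<pi> y) = madd N (\<pi> y) (\<pi> x)"
    by (simp add: lm_comm[OF lm])
  moreover have "\<forall>x\<in>mcarrier M. madd N (\<pi> x) (mzero N) = \<pi> x"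
    by (simp add: zero lm_r0[OF lm])
  moreover have "\<forall>x\<in>mcarrier M. madd N (\<pi> x) (act N (vsmult R (-1) (aone R)) (\<pi> x)) = mzero N"
    using lm_neg[OF lm] by (simp add: zero mneg_def)
  moreover have "\<forall>a b. \<forall>x\<in>mcarrier M. act N (vadd R a b) (\<pi> x) = madd N (act N a (\<pi> x)) (act N b (\<pi> x))"
    by (simp add: lm_distl[OF lm])
  moreover have "\<forall>a. \<forall>x\<in>mcarrier M. \<forall>y\<in>mcarrier M. act N a (madd N (\<pi> x) (\<pi> y)) = madd N (act N a (\<pi> x)) (act N a (\<pi> y))"
    by (simp add: lm_distr[OF lm])
  moreover have "\<forall>a b. \<forall>x\<in>mcarrier M. act N (amult R a b) (\<pi> x) = act N a (act N b (\<pi> x))"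
    by (simp add: lm_mult[OF lm])
  moreover have "\<forall>x\<in>mcarrier M. act N (aone R) (\<pi> x) = \<pi> x"
    by (simp add: lm_one[OF lm])
  moreover have "mzero N \<in> mcarrier N" using zero lm_zero[OF lm] by simp
  moreover have "\<forall>x\<in>mcarrier M. \<forall>y\<in>mcarrier M. madd N (\<pi> x) (\<pi> y) \<in> mcarrier N" by simp
  moreover have "\<forall>a. \<forall>x\<in>mcarrier M. act N a (\<pi> x) \<in> mcarrier N" by simp
  moreover have bi: "\<And>P. (\<forall>X\<in>mcarrier N. P X) = (\<forall>x\<in>mcarrier M. P (\<pi> x))" by simp
  ultimately show ?thesis unfolding lmodule_def bi zero[symmetric] by (intro conjI) assumption+
qed

definition pb :: "('a \<Rightarrow> 'h) \<Rightarrow> ('h,'m) lmod \<Rightarrow> ('a,'m) lmod" where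
  "pb p Z = \<lparr>mcarrier = mcarrier Z, madd = madd Z, mzero = mzero Z, act = (\<lambda>a. act Z (p a))\<rparr>"

lemma pb_simps[simp]: "mcarrier (pb p Z) = mcarrier Z" "madd (pb p Z) = madd Z" "mzero (pb p Z) = mzero Z"
  "act (pb p Z) a = act Z (p a)"
  by (auto simp: pb_def)

lemma pullback_lmodule:
  fixes A :: "('k::field, 'a, 'z) kalg_scheme" and H :: "('k, 'h, 'w) kalg_scheme"
  assumes lm: "lmodule H Z"
    and padd: "\<And>a b. p (vadd A a b) = vadd H (p a) (p b)"
    and pmult: "\<And>a b. p (amult A a b) = amult H (p a) (p b)"
    and pone: "p (aone A) = aone H"
    and psm: "\<And>c a. p (vsmult A c a) = vsmult H c (p a)"
  shows "lmodule A (pb p Z)"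
proof -
  note L = lm[unfolded lmodule_def]
  show ?thesis unfolding lmodule_def pb_simps padd pmult pone psm
    using L by (elim conjE) (intro conjI; simp)
qed

lemma step_lemma:
  fixes R :: "('k::field, 'a, 'z) kalg_scheme"
  assumes kR: "k_algebra R" and pQ: "projective R Q" and lX: "lmodule R X"
    and D: "mod_hom X Q D" and \<phi>: "mod_hom Q Q \<phi>"
    and ker: "\<And>w. w \<in> mcarrier Q \<Longrightarrow> madd Q w (mneg R Q (\<phi> w)) \<in> D ` mcarrier X"
  shows "\<exists>\<sigma>. mod_hom Q X \<sigma> \<and> (\<forall>w\<in>mcarrier Q. madd Q (D (\<sigma> w)) (\<phi> w) = w)"
proof -
  have lQ: "lmodule R Q" using pQ unfolding projective_def by auto
  have sub: "(\<lambda>w. madd Q w (mneg R Q (\<phi> w))) ` mcarrier Q \<subseteq> D ` mcarrier X"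
    using ker by (intro image_subsetI)
  obtain \<sigma> where s: "mod_hom Q X \<sigma>" and e: "\<forall>q\<in>mcarrier Q. D (\<sigma> q) = madd Q q (mneg R Q (\<phi> q))"
    using lifting[OF kR pQ lX lQ D hom_sub[OF kR lQ \<phi>] sub] by blast
  have "\<forall>w\<in>mcarrier Q. madd Q (D (\<sigma> w)) (\<phi> w) = w"
    using e lm_sub_self[OF lQ] hom_car[OF \<phi>] by simp
  thus ?thesis using s by (intro exI[of _ \<sigma>]) simp
qed




lemma vsum_nil[simp]: "vsum V [] = vzero V" unfolding vsum_def by simp
lemma vsum_cons[simp]: "vsum V (x # xs) = vadd V x (vsum V xs)" unfolding vsum_def by simp

lemma hopf_kalg: "hopf_algebra H \<Longrightarrow> k_algebra H"
  unfolding hopf_algebra_def bialgebra_def by auto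

context
  fixes B :: "('k::field, 'b) hopf" and A :: "('k, 'a) hopf" and H :: "('k, 'h) hopf"
    and i :: "'b \<Rightarrow> 'a" and p :: "'a \<Rightarrow> 'h"
    and M :: "('a, 'm) lmod"
  assumes ex: "exact_hopf_seq B A H i p" and pM: "projective A M"
begin

lemma kA: "k_algebra A" using ex hopf_kalg unfolding exact_hopf_seq_def by auto
lemma kH: "k_algebra H" using ex hopf_kalg unfolding exact_hopf_seq_def by auto
lemma lM: "lmodule A M" using pM unfolding projective_def by auto
lemma p_add: "p (vadd A a b) = vadd H (p a) (p b)"
  using ex unfolding exact_hopf_seq_def hopf_hom_def lin_map_def by auto
lemma p_sm: "p (vsmult A c a) = vsmult H c (p a)"
  using ex unfolding exact_hopf_seq_def hopf_hom_def lin_map_def by auto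
lemma p_mult: "p (amult A a b) = amult H (p a) (p b)"
  using ex unfolding exact_hopf_seq_def hopf_hom_def by auto
lemma p_one: "p (aone A) = aone H"
  using ex unfolding exact_hopf_seq_def hopf_hom_def by auto
lemma p_surj: "surj p"
  using ex unfolding exact_hopf_seq_def by auto
lemma ker1: "{a. p a = vzero H} =
       {vsum A (map (\<lambda>(b, x). amult A (i b) x) l) | l. \<forall>(b, x)\<in>set l. counit B b = 0}"
  using ex unfolding exact_hopf_seq_def by auto

lemma p_ib: "counit B b = 0 \<Longrightarrow> p (i b) = vzero H"
proof -
  assume "counit B b = 0"
  hence "vsum A (map (\<lambda>(b, x). amult A (i b) x) [(b, aone A)]) \<in> {a. p a = vzero H}"
    unfolding ker1 by (intro CollectI exI[of _ "[(b, aone A)]"]) simp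
  thus ?thesis using am_r1[OF kA] va_r0[OF kA] by simp
qed

abbreviation "K \<equiv> aug_sub B i M"

lemma K_sub: "K \<subseteq> mcarrier M"
proof
  fix u assume "u \<in> K"
  then obtain l where u: "u = msum M (map (\<lambda>(b, x). act M (i b) x) l)"
    and l: "\<forall>(b, x)\<in>set l. counit B b = 0 \<and> x \<in> mcarrier M" unfolding aug_sub_def by blast
  have "set (map (\<lambda>(b, x). act M (i b) x) l) \<subseteq> mcarrier M" using l lm_act[OF lM] by auto
  thus "u \<in> mcarrier M" using u msum_closed[OF lM] by simp
qed

lemma K_zero: "mzero M \<in> K"
  unfolding aug_sub_def by (rule CollectI, rule exI[of _ "[]"]) simp

lemma K_term: "counit B b = 0 \<Longrightarrow> x \<in> mcarrier M \<Longrightarrow> act M (i b) x \<in> K"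
  unfolding aug_sub_def
  by (rule CollectI, rule exI[of _ "[(b, x)]"]) (simp add: lm_r0[OF lM] lm_act[OF lM])

lemma K_add: "u \<in> K \<Longrightarrow> v \<in> K \<Longrightarrow> madd M u v \<in> K"
proof -
  assume "u \<in> K" "v \<in> K"
  then obtain l1 l2 where u: "u = msum M (map (\<lambda>(b, x). act M (i b) x) l1)"
    and l1: "\<forall>(b, x)\<in>set l1. counit B b = 0 \<and> x \<in> mcarrier M"
    and v: "v = msum M (map (\<lambda>(b, x). act M (i b) x) l2)"
    and l2: "\<forall>(b, x)\<in>set l2. counit B b = 0 \<and> x \<in> mcarrier M" unfolding aug_sub_def by blast
  have s1: "set (map (\<lambda>(b, x). act M (i b) x) l1) \<subseteq> mcarrier M" using l1 lm_act[OF lM] by auto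
  have s2: "set (map (\<lambda>(b, x). act M (i b) x) l2) \<subseteq> mcarrier M" using l2 lm_act[OF lM] by auto
  have "madd M u v = msum M (map (\<lambda>(b, x). act M (i b) x) (l1 @ l2))"
    using u v msum_append[OF lM s1 s2] by simp
  moreover have "\<forall>(b, x)\<in>set (l1 @ l2). counit B b = 0 \<and> x \<in> mcarrier M" using l1 l2 by auto
  ultimately show ?thesis unfolding aug_sub_def by blast
qed

lemma act_vsum: "m \<in> mcarrier M \<Longrightarrow> act M (vsum A xs) m = msum M (map (\<lambda>a. act M a m) xs)"
  by (induction xs) (auto simp: lm_actz[OF kA lM] lm_distl[OF lM])

lemma ker_K: assumes "p a = vzero H" "m \<in> mcarrier M" shows "act M a m \<in> K"
proof -
  obtain l where a: "a = vsum A (map (\<lambda>(b, x). amult A (i b) x) l)"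
    and l: "\<forall>(b, x)\<in>set l. counit B b = 0" using assms(1) ker1 by blast
  have "act M a m = msum M (map (\<lambda>(b, x). act M (i b) x) (map (\<lambda>(b, x). (b, act M x m)) l))"
    unfolding a act_vsum[OF assms(2)] using assms(2)
    by (simp add: comp_def case_prod_beta lm_mult[OF lM])
  moreover have "\<forall>(b, x)\<in>set (map (\<lambda>(b, x). (b, act M x m)) l). counit B b = 0 \<and> x \<in> mcarrier M"
    using l assms(2) lm_act[OF lM] by auto
  ultimately show ?thesis unfolding aug_sub_def by blast
qed

lemma K_act_aux: "\<forall>(b, x)\<in>set l. counit B b = 0 \<and> x \<in> mcarrier M \<Longrightarrow>
   act M a (msum M (map (\<lambda>(b, x). act M (i b) x) l)) \<in> K"
proof (induction l)
  case Nil thus ?case using lm_act0[OF lM] K_zero by simp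
next
  case (Cons bx l)
  obtain b x where bx: "bx = (b, x)" by fastforce
  have b: "counit B b = 0" and x: "x \<in> mcarrier M" using Cons.prems bx by auto
  have rest: "msum M (map (\<lambda>(b, x). act M (i b) x) l) \<in> mcarrier M"
    using Cons.prems lm_act[OF lM] by (intro msum_closed[OF lM]) auto
  have "act M a (act M (i b) x) = act M (amult A a (i b)) x" using lm_mult[OF lM x] by simp
  moreover have "p (amult A a (i b)) = vzero H" using p_mult p_ib[OF b] am_r0[OF kH] by simp
  ultimately have t: "act M a (act M (i b) x) \<in> K" using ker_K x by simp
  have "act M a (msum M (map (\<lambda>(b, x). act M (i b) x) (bx # l))) =
        madd M (act M a (act M (i b) x)) (act M a (msum M (map (\<lambda>(b, x). act M (i b) x) l)))"
    using bx lm_distr[OF lM] lm_act[OF lM x] rest by simp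
  moreover have "\<forall>(b, x)\<in>set l. counit B b = 0 \<and> x \<in> mcarrier M" using Cons.prems by simp
  hence ih: "act M a (msum M (map (\<lambda>(b, x). act M (i b) x) l)) \<in> K" by (rule Cons.IH)
  ultimately show ?case using K_add[OF t ih] by simp
qed

lemma K_act: assumes "u \<in> K" shows "act M a u \<in> K"
proof -
  obtain l where u: "u = msum M (map (\<lambda>(b, x). act M (i b) x) l)"
    and l: "\<forall>(b, x)\<in>set l. counit B b = 0 \<and> x \<in> mcarrier M"
    using assms unfolding aug_sub_def by blast
  show ?thesis unfolding u by (rule K_act_aux[OF l])
qed

abbreviation "\<pi> \<equiv> coset_of M K"

lemma pi_mem: "x \<in> \<pi> m \<longleftrightarrow> (\<exists>u\<in>K. x = madd M m u)"
  unfolding coset_of_def by blast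

lemma pi_self: "m \<in> mcarrier M \<Longrightarrow> m \<in> \<pi> m"
  using pi_mem K_zero lm_r0[OF lM] by metis

lemma pi_shift: assumes z: "z \<in> mcarrier M" and w: "w \<in> K" shows "\<pi> (madd M z w) = \<pi> z"
proof -
  have wc: "w \<in> mcarrier M" using w K_sub by auto
  note [simp] = lm_add[OF lM] lm_negc[OF lM]
  show ?thesis
  proof (intro equalityI subsetI)
      fix x
      assume "x \<in> \<pi> (madd M z w)"
      then obtain u where u: "u \<in> K" "x = madd M (madd M z w) u" using pi_mem by blast
      hence "x = madd M z (madd M w u)" using lm_assoc[OF lM] z wc K_sub by auto
      thus "x \<in> \<pi> z" using K_add[OF w u(1)] pi_mem by blast
    next
      fix x
      assume "x \<in> \<pi> z"
      then obtain u where u: "u \<in> K" "x = madd M z u" using pi_mem by blast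
      have uc: "u \<in> mcarrier M" using u K_sub by auto
      have nw: "mneg A M w \<in> K" using K_act[OF w] unfolding mneg_def .
      have "madd M (madd M z w) (madd M (mneg A M w) u) = madd M z (madd M (madd M w (mneg A M w)) u)"
        using lm_assoc[OF lM] z wc uc by simp
      also have "\<dots> = x" using u wc uc z lm_l0[OF lM] lm_neg[OF lM] by simp
      finally show "x \<in> \<pi> (madd M z w)" using K_add[OF nw u(1)] pi_mem by metis
  qed
qed

lemma some_pi: "m \<in> mcarrier M \<Longrightarrow> \<exists>u\<in>K. (SOME x. x \<in> \<pi> m) = madd M m u"
  using someI[of "\<lambda>x. x \<in> \<pi> m" m] pi_self pi_mem by blast

abbreviation "N \<equiv> quot_mod B i p M"

lemma N_car: "mcarrier N = \<pi> ` mcarrier M" unfolding quot_mod_def Let_def by simp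
lemma N_zero: "mzero N = \<pi> (mzero M)" unfolding quot_mod_def Let_def by simp

lemma N_add: assumes x: "x \<in> mcarrier M" and y: "y \<in> mcarrier M"
  shows "madd N (\<pi> x) (\<pi> y) = \<pi> (madd M x y)"
proof -
  obtain u where u: "u \<in> K" "(SOME z. z \<in> \<pi> x) = madd M x u" using some_pi[OF x] by blast
  obtain v where v: "v \<in> K" "(SOME z. z \<in> \<pi> y) = madd M y v" using some_pi[OF y] by blast
  have "madd N (\<pi> x) (\<pi> y) = \<pi> (madd M (madd M x u) (madd M y v))"
    unfolding quot_mod_def Let_def using u v by simp
  also have "\<dots> = \<pi> (madd M (madd M x y) (madd M u v))"
  proof -
    have "u \<in> mcarrier M" "v \<in> mcarrier M" using u v K_sub by auto
    from lm_swap[OF lM x this(1) y this(2)] show ?thesis by simp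
  qed
  also have "\<dots> = \<pi> (madd M x y)" using pi_shift K_add[OF u(1) v(1)] lm_add[OF lM x y] by simp
  finally show ?thesis .
qed

lemma act_neg1: "x \<in> mcarrier M \<Longrightarrow> act M (vsmult A (-1) a) x = mneg A M (act M a x)"
proof -
  assume x: "x \<in> mcarrier M"
  have "vsmult A (-1) a = amult A (vsmult A (-1) (aone A)) a" using am_sl[OF kA] am_l1[OF kA] by simp
  thus ?thesis using lm_mult[OF lM x] unfolding mneg_def by simp
qed

lemma N_act: assumes x: "x \<in> mcarrier M"
  shows "act N (p a) (\<pi> x) = \<pi> (act M a x)"
proof -
  define a' where "a' = (SOME a'. p a' = p a)"
  have pa': "p a' = p a" unfolding a'_def by (rule someI) simp
  obtain u where u: "u \<in> K" "(SOME z. z \<in> \<pi> x) = madd M x u" using some_pi[OF x] by blast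
  have uc: "u \<in> mcarrier M" using u K_sub by auto
  have eqa: "act M a' x = madd M (act M a x) (act M (vadd A a' (vsmult A (-1) a)) x)"
  proof -
    have "act M (vadd A a' (vsmult A (-1) a)) x = madd M (act M a' x) (mneg A M (act M a x))"
      using lm_distl[OF lM x] act_neg1[OF x] by simp
    moreover have "madd M (act M a x) (madd M (act M a' x) (mneg A M (act M a x))) = act M a' x"
    proof -
      have c1: "act M a x \<in> mcarrier M" "act M a' x \<in> mcarrier M" "mneg A M (act M a x) \<in> mcarrier M"
        using lm_act[OF lM x] lm_negc[OF lM] by auto
      have "madd M (act M a x) (madd M (act M a' x) (mneg A M (act M a x))) =
            madd M (act M a x) (madd M (mneg A M (act M a x)) (act M a' x))"
        using lm_comm[OF lM c1(2) c1(3)] by simp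
      also have "\<dots> = madd M (madd M (act M a x) (mneg A M (act M a x))) (act M a' x)"
        using lm_assoc[OF lM c1(1) c1(3) c1(2)] by simp
      also have "\<dots> = act M a' x" using lm_neg[OF lM c1(1)] lm_l0[OF lM c1(2)] by simp
      finally show ?thesis .
    qed
    ultimately show ?thesis by simp
  qed
  have "act N (p a) (\<pi> x) = \<pi> (act M a' (madd M x u))"
    unfolding quot_mod_def Let_def a'_def using u by simp
  also have "\<dots> = \<pi> (madd M (act M a' x) (act M a' u))" using lm_distr[OF lM x uc] by simp
  also have "\<dots> = \<pi> (act M a' x)" using pi_shift K_act[OF u(1)] lm_act[OF lM x] by simp
  also have "\<pi> (act M a' x) = \<pi> (madd M (act M a x) (act M (vadd A a' (vsmult A (-1) a)) x))"
    by (subst eqa) (rule refl)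
  also have "\<pi> (madd M (act M a x) (act M (vadd A a' (vsmult A (-1) a)) x)) = \<pi> (act M a x)"
  proof (rule pi_shift)
    show "act M a x \<in> mcarrier M" using lm_act[OF lM x] .
    have "p (vadd A a' (vsmult A (-1) a)) = vzero H" unfolding p_add p_sm pa' by (rule va_neg[OF kH])
    thus "act M (vadd A a' (vsmult A (-1) a)) x \<in> K" by (rule ker_K[OF _ x])
  qed
  finally show ?thesis .
qed


lemma section_lemma:
  fixes P :: "nat \<Rightarrow> ('h, 'c) lmod" and d :: "nat \<Rightarrow> 'c \<Rightarrow> 'c" and e :: "'c \<Rightarrow> 'm set"
  assumes res: "proj_resolution H N P d e"
  shows "\<exists>t. mod_hom (P 0) (P 0) (t \<circ> e) \<and> t (mzero N) = mzero (P 0) \<and>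
             (\<forall>z\<in>mcarrier (P 0). madd (P 0) z (mneg H (P 0) (t (e z))) \<in> d 0 ` mcarrier (P 1))"
proof -
  have lP0: "lmodule H (P 0)" using res unfolding proj_resolution_def projective_def by auto
  have eh: "mod_hom (P 0) N e" and esurj: "e ` mcarrier (P 0) = mcarrier N"
    and eker: "{x \<in> mcarrier (P 0). e x = mzero N} = d 0 ` mcarrier (P 1)"
    using res unfolding proj_resolution_def by auto
  have lP0A: "lmodule A (pb p (P 0))"
    by (rule pullback_lmodule[OF lP0]) (auto simp: p_add p_mult p_one p_sm)
  have lNA: "lmodule A (pb p N)"
    by (rule image_lmodule[OF lM, of _ \<pi>]) (auto simp: N_car N_add N_zero N_act)
  have eA: "mod_hom (pb p (P 0)) (pb p N) e" using eh unfolding mod_hom_def by simp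
  have piA: "mod_hom M (pb p N) \<pi>"
    unfolding mod_hom_def using N_car N_add N_act by auto
  have sub: "\<pi> ` mcarrier M \<subseteq> e ` mcarrier (pb p (P 0))" using esurj N_car by simp
  obtain hm where hm: "mod_hom M (pb p (P 0)) hm" and ehm: "\<forall>m\<in>mcarrier M. e (hm m) = \<pi> m"
    using lifting[OF kA pM lP0A lNA eA piA sub] by blast
  have hm_c: "m \<in> mcarrier M \<Longrightarrow> hm m \<in> mcarrier (P 0)" for m using hom_car[OF hm] by simp
  have hm_add: "m \<in> mcarrier M \<Longrightarrow> m' \<in> mcarrier M \<Longrightarrow> hm (madd M m m') = madd (P 0) (hm m) (hm m')"
    for m m' using hom_add[OF hm] by simp
  have hm_act: "m \<in> mcarrier M \<Longrightarrow> hm (act M a m) = act (P 0) (p a) (hm m)" for m a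
    using hom_act[OF hm] by simp
  have hm0: "hm (mzero M) = mzero (P 0)" using hom_zero[OF lM lP0A hm] by simp
  have hmK_aux: "\<forall>(b, x)\<in>set l. counit B b = 0 \<and> x \<in> mcarrier M \<Longrightarrow>
     hm (msum M (map (\<lambda>(b, x). act M (i b) x) l)) = mzero (P 0)" for l
  proof (induction l)
    case Nil thus ?case using hm0 by simp
  next
    case (Cons bx l)
    obtain b x where bx: "bx = (b, x)" by fastforce
    have b: "counit B b = 0" and x: "x \<in> mcarrier M" using Cons.prems bx by auto
    have rest: "msum M (map (\<lambda>(b, x). act M (i b) x) l) \<in> mcarrier M"
      using Cons.prems lm_act[OF lM] by (intro msum_closed[OF lM]) auto
    have "hm (act M (i b) x) = mzero (P 0)"
      using hm_act[OF x] p_ib[OF b] lm_actz[OF kH lP0 hm_c[OF x]] by simp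
    thus ?case using bx hm_add[OF lm_act[OF lM x] rest] Cons lm_r0[OF lP0] lm_zero[OF lP0] by simp
  qed
  have hmK: "u \<in> K \<Longrightarrow> hm u = mzero (P 0)" for u
    unfolding aug_sub_def[of B i M] using hmK_aux by blast
  define t where "t X = hm (SOME m. m \<in> X)" for X
  have t_pi: "m \<in> mcarrier M \<Longrightarrow> t (\<pi> m) = hm m" for m
  proof -
    assume m: "m \<in> mcarrier M"
    obtain u where u: "u \<in> K" "(SOME x. x \<in> \<pi> m) = madd M m u" using some_pi[OF m] by blast
    have "u \<in> mcarrier M" using u K_sub by auto
    thus ?thesis unfolding t_def using u hm_add[OF m] hmK[OF u(1)] lm_r0[OF lP0 hm_c[OF m]] by simp
  qed
  have epre: "z \<in> mcarrier (P 0) \<Longrightarrow> \<exists>m\<in>mcarrier M. e z = \<pi> m" for z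
  proof -
    assume "z \<in> mcarrier (P 0)"
    hence "e z \<in> \<pi> ` mcarrier M" using esurj N_car by blast
    thus ?thesis by blast
  qed
  have F1: "mod_hom (P 0) (P 0) (t \<circ> e)"
    unfolding mod_hom_def
  proof (intro conjI ballI allI)
    show "(t \<circ> e) ` mcarrier (P 0) \<subseteq> mcarrier (P 0)"
    proof (rule image_subsetI)
      fix z assume "z \<in> mcarrier (P 0)"
      then obtain m where "m \<in> mcarrier M" "e z = \<pi> m" using epre by blast
      thus "(t \<circ> e) z \<in> mcarrier (P 0)" using t_pi hm_c by simp
    qed
  next
    fix z w assume z: "z \<in> mcarrier (P 0)" and w: "w \<in> mcarrier (P 0)"
    obtain m where m: "m \<in> mcarrier M" "e z = \<pi> m" using epre[OF z] by blast
    obtain m' where m': "m' \<in> mcarrier M" "e w = \<pi> m'" using epre[OF w] by blast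
    have "e (madd (P 0) z w) = \<pi> (madd M m m')" using hom_add[OF eh z w] m m' N_add by simp
    thus "(t \<circ> e) (madd (P 0) z w) = madd (P 0) ((t \<circ> e) z) ((t \<circ> e) w)"
      using t_pi m m' hm_add lm_add[OF lM] by simp
  next
    fix h z assume z: "z \<in> mcarrier (P 0)"
    have "h \<in> range p" using p_surj by simp
    then obtain a where a: "h = p a" by blast
    obtain m where m: "m \<in> mcarrier M" "e z = \<pi> m" using epre[OF z] by blast
    have "e (act (P 0) h z) = \<pi> (act M a m)" using hom_act[OF eh z] m a N_act by simp
    thus "(t \<circ> e) (act (P 0) h z) = act (P 0) h ((t \<circ> e) z)"
      using t_pi m hm_act a lm_act[OF lM] by simp
  qed
  have F2: "t (mzero N) = mzero (P 0)" using N_zero t_pi lm_zero[OF lM] hm0 by simp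
  have F3: "madd (P 0) z (mneg H (P 0) (t (e z))) \<in> d 0 ` mcarrier (P 1)"
    if z: "z \<in> mcarrier (P 0)" for z
  proof -
    obtain m where m: "m \<in> mcarrier M" "e z = \<pi> m" using epre[OF z] by blast
    have tz: "t (e z) = hm m" using m t_pi by simp
    have "e (mneg H (P 0) (hm m)) = act N (p (vsmult A (-1) (aone A))) (e (hm m))"
      unfolding mneg_def using hom_act[OF eh hm_c[OF m(1)]] p_sm p_one by simp
    also have "\<dots> = \<pi> (mneg A M m)" using ehm m N_act unfolding mneg_def by simp
    finally have "e (madd (P 0) z (mneg H (P 0) (t (e z)))) = madd N (\<pi> m) (\<pi> (mneg A M m))"
      using hom_add[OF eh z lm_negc[OF lP0 hm_c[OF m(1)]]] m tz by simp
    also have "\<dots> = mzero N" using N_add[OF m(1) lm_negc[OF lM m(1)]] lm_neg[OF lM m(1)] N_zero by simp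
    finally have "madd (P 0) z (mneg H (P 0) (t (e z))) \<in> {x \<in> mcarrier (P 0). e x = mzero N}"
      using z tz lm_add[OF lP0] lm_negc[OF lP0] hm_c[OF m(1)] by simp
    thus ?thesis unfolding eker .
  qed
  show ?thesis apply (rule exI[of _ t]) using F1 F2 F3 by simp
qed

end




lemma hom_aug:
  fixes H :: "('k::field, 'h, 'z) hopf_scheme"
  assumes lX: "lmodule H X" and lY: "lmodule H Y" and f: "mod_hom X Y f"
  shows "\<forall>(h, x)\<in>set l. counit H h = 0 \<and> x \<in> mcarrier X \<Longrightarrow>
     f (msum X (map (\<lambda>(h, x). act X h x) l)) = msum Y (map (\<lambda>(h, x). act Y h x) (map (\<lambda>(h, x). (h, f x)) l))"
proof (induction l)
  case Nil thus ?case using hom_zero[OF lX lY f] by simp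
next
  case (Cons hx l)
  obtain h x where hx: "hx = (h, x)" by fastforce
  have x: "x \<in> mcarrier X" using Cons.prems hx by auto
  have rest: "msum X (map (\<lambda>(h, x). act X h x) l) \<in> mcarrier X"
    using Cons.prems lm_act[OF lX] by (intro msum_closed[OF lX]) auto
  have "\<forall>(h, x)\<in>set l. counit H h = 0 \<and> x \<in> mcarrier X" using Cons.prems by simp
  hence ih: "f (msum X (map (\<lambda>(h, x). act X h x) l)) = msum Y (map (\<lambda>(h, x). act Y h x) (map (\<lambda>(h, x). (h, f x)) l))"
    by (rule Cons.IH)
  show ?case using hx hom_add[OF f lm_act[OF lX x] rest] hom_act[OF f x] ih by simp
qed

lemma aug_hom:
  fixes H :: "('k::field, 'h, 'z) hopf_scheme"
  assumes lX: "lmodule H X" and lY: "lmodule H Y" and f: "mod_hom X Y f" and u: "u \<in> aug_mod H X"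
  shows "f u \<in> aug_mod H Y"
proof -
  obtain l where ul: "u = msum X (map (\<lambda>(h, x). act X h x) l)"
    and l: "\<forall>(h, x)\<in>set l. counit H h = 0 \<and> x \<in> mcarrier X"
    using u unfolding aug_mod_def by blast
  have "\<forall>(h, x)\<in>set (map (\<lambda>(h, x). (h, f x)) l). counit H h = 0 \<and> x \<in> mcarrier Y"
    using l hom_car[OF f] by auto
  moreover have "f u = msum Y (map (\<lambda>(h, x). act Y h x) (map (\<lambda>(h, x). (h, f x)) l))"
    unfolding ul by (rule hom_aug[OF lX lY f l])
  ultimately show ?thesis unfolding aug_mod_def by blast
qed

theorem proposition3p19:
  fixes B :: "('k::field, 'b) hopf" and A :: "('k, 'a) hopf" and H :: "('k, 'h) hopf"
    and i :: "'b \<Rightarrow> 'a" and p :: "'a \<Rightarrow> 'h"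
    and M :: "('a, 'm) lmod"
    and P :: "nat \<Rightarrow> ('h, 'c) lmod" and d :: "nat \<Rightarrow> 'c \<Rightarrow> 'c" and e :: "'c \<Rightarrow> 'm set"
  assumes "exact_hopf_seq B A H i p"
    and "projective A M"
    and "proj_resolution H (quot_mod B i p M) P d e"
    and "n \<ge> 1"
  shows "tor_homology_vanishes H P d n"
proof -
  note ex = assms(1) and pM = assms(2) and res = assms(3)
  have kH: "k_algebra H" using kH[OF ex pM] .
  have pP: "\<And>j. projective H (P j)" using res unfolding proj_resolution_def by auto
  have lP: "\<And>j. lmodule H (P j)" using pP unfolding projective_def by auto
  have dh: "\<And>j. mod_hom (P (Suc j)) (P j) (d j)" using res unfolding proj_resolution_def by auto
  have eh: "mod_hom (P 0) (quot_mod B i p M) e" using res unfolding proj_resolution_def by auto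
  have eker: "{x \<in> mcarrier (P 0). e x = mzero (quot_mod B i p M)} = d 0 ` mcarrier (P (Suc 0))"
    using res unfolding proj_resolution_def One_nat_def by auto
  have dker: "\<And>j. {x \<in> mcarrier (P (Suc j)). d j x = mzero (P j)} = d (Suc j) ` mcarrier (P (Suc (Suc j)))"
    using res unfolding proj_resolution_def by auto
  have dd: "d j (d (Suc j) w) = mzero (P j)" if "w \<in> mcarrier (P (Suc (Suc j)))" for j w
  proof -
    have "d (Suc j) w \<in> d (Suc j) ` mcarrier (P (Suc (Suc j)))" using that by blast
    thus ?thesis unfolding dker[symmetric] by blast
  qed
  have ed: "e (d 0 w) = mzero (quot_mod B i p M)" if "w \<in> mcarrier (P (Suc 0))" for w
  proof -
    have "d 0 w \<in> d 0 ` mcarrier (P (Suc 0))" using that by blast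
    thus ?thesis unfolding eker[symmetric] by blast
  qed
  obtain t where tF1: "mod_hom (P 0) (P 0) (t \<circ> e)" and tF2: "t (mzero (quot_mod B i p M)) = mzero (P 0)"
    and tF3: "\<forall>z\<in>mcarrier (P 0). madd (P 0) z (mneg H (P 0) (t (e z))) \<in> d 0 ` mcarrier (P (Suc 0))"
    using section_lemma[OF ex pM res, unfolded One_nat_def] by blast
  obtain \<tau>0 where \<tau>0: "mod_hom (P 0) (P (Suc 0)) \<tau>0"
    and \<tau>0e: "\<forall>w\<in>mcarrier (P 0). madd (P 0) (d 0 (\<tau>0 w)) ((t \<circ> e) w) = w"
    using step_lemma[OF kH pP[of 0] lP[of "Suc 0"] dh[of 0] tF1] tF3 by auto
  have nextstep: "\<exists>\<sigma>'. mod_hom (P (Suc j)) (P (Suc (Suc j))) \<sigma>' \<and>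
        (\<forall>w\<in>mcarrier (P (Suc j)). madd (P (Suc j)) (d (Suc j) (\<sigma>' w)) (\<sigma> (d j w)) = w)"
    if \<sigma>: "mod_hom (P j) (P (Suc j)) \<sigma>"
      and idz: "\<And>z. z \<in> d j ` mcarrier (P (Suc j)) \<Longrightarrow> d j (\<sigma> z) = z"
    for j \<sigma>
  proof -
    have \<phi>: "mod_hom (P (Suc j)) (P (Suc j)) (\<sigma> \<circ> d j)" using hom_comp[OF dh[of j] \<sigma>] .
    have ker: "madd (P (Suc j)) w (mneg H (P (Suc j)) ((\<sigma> \<circ> d j) w)) \<in> d (Suc j) ` mcarrier (P (Suc (Suc j)))"
      if w: "w \<in> mcarrier (P (Suc j))" for w
    proof -
      have z: "d j w \<in> mcarrier (P j)" using hom_car[OF dh w] .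
      have sz: "\<sigma> (d j w) \<in> mcarrier (P (Suc j))" using hom_car[OF \<sigma> z] .
      have "d j (madd (P (Suc j)) w (mneg H (P (Suc j)) (\<sigma> (d j w)))) =
            madd (P j) (d j w) (mneg H (P j) (d j (\<sigma> (d j w))))"
        using hom_add[OF dh w lm_negc[OF lP sz]] hom_neg[where R=H, OF dh sz] by simp
      also have "d j (\<sigma> (d j w)) = d j w" using idz w by blast
      also have "madd (P j) (d j w) (mneg H (P j) (d j w)) = mzero (P j)" using lm_neg[OF lP z] .
      finally have "madd (P (Suc j)) w (mneg H (P (Suc j)) (\<sigma> (d j w))) \<in>
          {x \<in> mcarrier (P (Suc j)). d j x = mzero (P j)}"
        using w sz lm_add[OF lP] lm_negc[OF lP] by simp
      thus ?thesis unfolding dker by simp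
    qed
    show ?thesis using step_lemma[OF kH pP lP dh \<phi>] ker by simp
  qed
  have HC: "\<exists>\<sigma> \<tau>. mod_hom (P (Suc j)) (P (Suc (Suc j))) \<sigma> \<and> mod_hom (P j) (P (Suc j)) \<tau> \<and>
        (\<forall>z\<in>mcarrier (P (Suc j)). madd (P (Suc j)) (d (Suc j) (\<sigma> z)) (\<tau> (d j z)) = z)" for j
  proof (induction j)
    case 0
    have idz: "d 0 (\<tau>0 z) = z" if zi: "z \<in> d 0 ` mcarrier (P (Suc 0))" for z
    proof -
      obtain w where w: "w \<in> mcarrier (P (Suc 0))" "z = d 0 w" using zi by (rule imageE) blast
      have zc: "z \<in> mcarrier (P 0)" using w hom_car[OF dh] by simp
      have "(t \<circ> e) z = mzero (P 0)" using ed[OF w(1)] w(2) tF2 by simp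
      moreover have "madd (P 0) (d 0 (\<tau>0 z)) ((t \<circ> e) z) = z" using \<tau>0e zc by blast
      ultimately show ?thesis using lm_r0[OF lP hom_car[OF dh hom_car[OF \<tau>0 zc]]] by simp
    qed
    obtain \<sigma> where "mod_hom (P (Suc 0)) (P (Suc (Suc 0))) \<sigma>"
      "\<forall>w\<in>mcarrier (P (Suc 0)). madd (P (Suc 0)) (d (Suc 0) (\<sigma> w)) (\<tau>0 (d 0 w)) = w"
      using nextstep[of 0 \<tau>0] \<tau>0 idz by auto
    thus ?case using \<tau>0 by blast
  next
    case (Suc j)
    then obtain \<sigma> \<tau> where s: "mod_hom (P (Suc j)) (P (Suc (Suc j))) \<sigma>"
      and tt: "mod_hom (P j) (P (Suc j)) \<tau>"
      and ide: "\<forall>z\<in>mcarrier (P (Suc j)). madd (P (Suc j)) (d (Suc j) (\<sigma> z)) (\<tau> (d j z)) = z" by blast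
    have idz: "d (Suc j) (\<sigma> z) = z" if zi: "z \<in> d (Suc j) ` mcarrier (P (Suc (Suc j)))" for z
    proof -
      obtain w where w: "w \<in> mcarrier (P (Suc (Suc j)))" "z = d (Suc j) w" using zi by (rule imageE) blast
      have zc: "z \<in> mcarrier (P (Suc j))" using w hom_car[OF dh] by simp
      have "\<tau> (d j z) = mzero (P (Suc j))" using dd[OF w(1)] w(2) hom_zero[OF lP lP tt] by simp
      moreover have "madd (P (Suc j)) (d (Suc j) (\<sigma> z)) (\<tau> (d j z)) = z" using ide zc by blast
      ultimately show ?thesis using lm_r0[OF lP hom_car[OF dh hom_car[OF s zc]]] by simp
    qed
    obtain \<sigma>' where "mod_hom (P (Suc (Suc j))) (P (Suc (Suc (Suc j)))) \<sigma>'"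
      "\<forall>w\<in>mcarrier (P (Suc (Suc j))). madd (P (Suc (Suc j))) (d (Suc (Suc j)) (\<sigma>' w)) (\<sigma> (d (Suc j) w)) = w"
      using nextstep[of "Suc j" \<sigma>] s idz by auto
    thus ?case using s by blast
  qed
  obtain m where n: "n = Suc m" using assms(4) by (cases n) auto
  obtain \<sigma> \<tau> where s: "mod_hom (P (Suc m)) (P (Suc (Suc m))) \<sigma>"
      and tt: "mod_hom (P m) (P (Suc m)) \<tau>"
      and ide: "\<forall>z\<in>mcarrier (P (Suc m)). madd (P (Suc m)) (d (Suc m) (\<sigma> z)) (\<tau> (d m z)) = z"
    using HC[of m] by blast
  have "{x \<in> mcarrier (P (Suc m)). d m x \<in> aug_mod H (P m)} \<subseteq>
         {madd (P (Suc m)) (d (Suc m) y) u | y u. y \<in> mcarrier (P (Suc (Suc m))) \<and> u \<in> aug_mod H (P (Suc m))}"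
  proof (rule subsetI)
    fix x assume "x \<in> {x \<in> mcarrier (P (Suc m)). d m x \<in> aug_mod H (P m)}"
    hence x: "x \<in> mcarrier (P (Suc m))" and dx: "d m x \<in> aug_mod H (P m)" by auto
    have y: "\<sigma> x \<in> mcarrier (P (Suc (Suc m)))" using hom_car[OF s x] .
    have u: "\<tau> (d m x) \<in> aug_mod H (P (Suc m))" using aug_hom[OF lP lP tt dx] .
    have "x = madd (P (Suc m)) (d (Suc m) (\<sigma> x)) (\<tau> (d m x))" using ide x by simp
    thus "x \<in> {madd (P (Suc m)) (d (Suc m) y) u | y u. y \<in> mcarrier (P (Suc (Suc m))) \<and> u \<in> aug_mod H (P (Suc m))}"
      using y u by blast
  qed
  thus ?thesis unfolding tor_homology_vanishes_def n by simp
qed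


end
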